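(* Let $\mathfrak g_0=\mathfrak{sl}(2n,\mathbb R)$, $n\ge2$. A $\Delta^+(\mathfrak k,\mathfrak t_f)$-dominant weight $\mu=(a_1,\dots,a_n)$ (so $a_1\ge\cdots\ge a_{n-1}\ge|a_n|$, with all $a_i\in\mathbb Z$ or all $a_i\in\mathbb Z+\tfrac12$) lies in $R(\Delta(\mathfrak p,\mathfrak t_f))$ if and only if $$a_1+\cdots+a_k\le 2nk-k^2+k\ \ (1\le k\le n)\quad\text{and}\quad a_1+\cdots+a_{n-1}-a_n\le n^2+n.$$ In particular every such $\mu$ with $a_1\le n+1$ is u-small.
   Context: Here $\mathfrak k=\mathfrak{so}(2n,\mathbb C)$ and $i\mathfrak t_{f,0}^*$ has coordinates with respect to an orthogonal basis $e_1,\dots,e_n$ (of equal lengths); $\Delta^+(\mathfrak k,\mathfrak t_f)=\{e_i\pm e_j:1\le i<j\le n\}$ and $\Delta(\mathfrak p,\mathfrak t_f)=\{\pm(e_i\pm e_j):i<j\}\cup\{\pm2e_i\}$. $R(\Delta(\mathfrak p,\mathfrak t_f))=\{\sum_{\alpha\in\Delta(\mathfrak p,\mathfrak t_f)}b_\alpha\alpha:0\le b_\alpha\le1\}$, and $\mu$ is called u-small if it lies in this set. *)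

theory Defs
  imports Complex_Main
begin

text \<open>Weights in i t_{f,0}^* are represented by their coordinates with respect to
the orthogonal basis e_1,...,e_n, i.e. as functions nat => real, where only the
indices 1..n are relevant (all roots vanish outside 1..n).\<close>

definition unitvec :: "nat \<Rightarrow> nat \<Rightarrow> real" where
  "unitvec i = (\<lambda>j. if j = i then 1 else 0)"

definition delta_p :: "nat \<Rightarrow> (nat \<Rightarrow> real) set" where
  "delta_p n =
     {(\<lambda>m. s * (unitvec i m + t * unitvec j m)) | s t i j.
        s \<in> {1, -1} \<and> t \<in> {1, -1} \<and> 1 \<le> i \<and> i < j \<and> j \<le> n}
   \<union> {(\<lambda>m. s * (2 * unitvec i m)) | s i. s \<in> {1, -1} \<and> 1 \<le> i \<and> i \<le> n}"

definition in_R_delta_p :: "nat \<Rightarrow> (nat \<Rightarrow> real) \<Rightarrow> bool" where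
  "in_R_delta_p n mu \<longleftrightarrow>
     (\<exists>b :: (nat \<Rightarrow> real) \<Rightarrow> real.
        (\<forall>\<alpha>\<in>delta_p n. 0 \<le> b \<alpha> \<and> b \<alpha> \<le> 1) \<and>
        (\<forall>m\<in>{1..n}. mu m = (\<Sum>\<alpha>\<in>delta_p n. b \<alpha> * \<alpha> m)))"

definition u_small :: "nat \<Rightarrow> (nat \<Rightarrow> real) \<Rightarrow> bool" where
  "u_small n mu \<longleftrightarrow> in_R_delta_p n mu"

definition k_dominant :: "nat \<Rightarrow> (nat \<Rightarrow> real) \<Rightarrow> bool" where
  "k_dominant n a \<longleftrightarrow>
     (\<forall>i. 1 \<le> i \<and> i < n - 1 \<longrightarrow> a (i + 1) \<le> a i) \<and> \<bar>a n\<bar> \<le> a (n - 1)"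

definition int_or_half_int :: "nat \<Rightarrow> (nat \<Rightarrow> real) \<Rightarrow> bool" where
  "int_or_half_int n a \<longleftrightarrow>
     (\<forall>i\<in>{1..n}. a i \<in> \<int>) \<or> (\<forall>i\<in>{1..n}. a i - 1/2 \<in> \<int>)"

end

theory Submission
  imports Defs "HOL-Analysis.Analysis"
begin

definition dotp :: "nat \<Rightarrow> (nat\<Rightarrow>real) \<Rightarrow> (nat\<Rightarrow>real) \<Rightarrow> real" where
  "dotp n c v = (\<Sum>m=1..n. c m * v m)"

definition hsupp :: "nat \<Rightarrow> (nat\<Rightarrow>real) \<Rightarrow> real" where
  "hsupp n c = (\<Sum>\<alpha>\<in>delta_p n. max 0 (dotp n c \<alpha>))"

definition Offd :: "nat set \<Rightarrow> (nat \<times> nat) set" where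
  "Offd T = {(i,j). i \<in> T \<and> j \<in> T \<and> i \<noteq> j}"

definition GG :: "nat \<Rightarrow> (nat \<Rightarrow> real) \<Rightarrow> real" where
  "GG n g = 2 * (\<Sum>i=1..n. g i) + (\<Sum>(i,j)\<in>Offd {1..n}. max (g i) (g j))"

definition phiA :: "real \<times> real \<times> nat \<times> nat \<Rightarrow> (nat \<Rightarrow> real)" where
  "phiA = (\<lambda>(s,t,i,j). (\<lambda>m. s * (unitvec i m + t * unitvec j m)))"
definition phiB :: "real \<times> nat \<Rightarrow> (nat \<Rightarrow> real)" where
  "phiB = (\<lambda>(s,i). (\<lambda>m. s * (2 * unitvec i m)))"
definition PP :: "nat \<Rightarrow> (nat \<times> nat) set" where
  "PP n = {(i,j). 1 \<le> i \<and> i < j \<and> j \<le> n}"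

lemma delta_splitA: "{(\<lambda>m. s * (unitvec i m + t * unitvec j m)) | s t i j.
        s \<in> {1, -1} \<and> t \<in> {1, -1} \<and> 1 \<le> i \<and> i < j \<and> j \<le> n} = phiA ` ({1,-1} \<times> {1,-1} \<times> PP n)"
proof (intro set_eqI iffI)
  fix u assume "u \<in> {(\<lambda>m. s * (unitvec i m + t * unitvec j m)) | s t i j.
        s \<in> {1, -1} \<and> t \<in> {1, -1} \<and> 1 \<le> i \<and> i < j \<and> j \<le> n}"
  then obtain s t i j where "u = (\<lambda>m. s * (unitvec i m + t * unitvec j m))" 
     "s \<in> {1, -1} \<and> t \<in> {1, -1} \<and> 1 \<le> i \<and> i < j \<and> j \<le> n" by auto
  then show "u \<in> phiA ` ({1,-1} \<times> {1,-1} \<times> PP n)" unfolding phiA_def PP_def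
    by (intro image_eqI[where x="(s,t,i,j)"]) auto
next
  fix u assume "u \<in> phiA ` ({1,-1} \<times> {1,-1} \<times> PP n)"
  then obtain x where x: "x \<in> {1,-1} \<times> {1,-1} \<times> PP n" "u = phiA x" by (rule imageE)
  obtain s t i j where "x = (s,t,i,j)" by (cases x)
  then have "(s,t,i,j) \<in> {1,-1} \<times> {1,-1} \<times> PP n" "u = phiA (s,t,i,j)" using x by auto
  then have "u = (\<lambda>m. s * (unitvec i m + t * unitvec j m))"  
     "s \<in> {1, -1} \<and> t \<in> {1, -1} \<and> 1 \<le> i \<and> i < j \<and> j \<le> n" by (auto simp: phiA_def PP_def)
  then show "u \<in> {(\<lambda>m. s * (unitvec i m + t * unitvec j m)) | s t i j.
        s \<in> {1, -1} \<and> t \<in> {1, -1} \<and> 1 \<le> i \<and> i < j \<and> j \<le> n}" 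
    by auto
qed

lemma delta_splitB: "{(\<lambda>m. s * (2 * unitvec i m)) | s i. s \<in> {1, -1} \<and> 1 \<le> i \<and> i \<le> n}
   = phiB ` ({1,-1} \<times> {1..n})"
proof (intro set_eqI iffI)
  fix u assume "u \<in> {(\<lambda>m. s * (2 * unitvec i m)) | s i. s \<in> {1, -1} \<and> 1 \<le> i \<and> i \<le> n}"
  then obtain s i where "u = (\<lambda>m. s * (2 * unitvec i m))" "s \<in> {1, -1} \<and> 1 \<le> i \<and> i \<le> n" unfolding mem_Collect_eq by metis
  then show "u \<in> phiB ` ({1,-1} \<times> {1..n})" unfolding phiB_def
    by (intro image_eqI[where x="(s,i)"]) auto
next
  fix u assume "u \<in> phiB ` ({1,-1} \<times> {1..n})"
  then obtain s i where "(s,i) \<in> {1,-1} \<times> {1..n}" "u = phiB (s,i)" by blast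
  then have "u = (\<lambda>m. s * (2 * unitvec i m))" "s \<in> {1, -1} \<and> 1 \<le> i \<and> i \<le> n" by (auto simp: phiB_def)
  then show "u \<in> {(\<lambda>m. s * (2 * unitvec i m)) | s i. s \<in> {1, -1} \<and> 1 \<le> i \<and> i \<le> n}"
    by auto
qed

lemma delta_split: "delta_p n = phiA ` ({1,-1} \<times> {1,-1} \<times> PP n) \<union> phiB ` ({1,-1} \<times> {1..n})"
  unfolding delta_p_def delta_splitA delta_splitB ..

lemma phiA_inj: "inj_on phiA ({1,-1} \<times> {1,-1} \<times> PP n)"
proof (rule inj_onI)
  fix x y
  assume H0: "x \<in> {1,-1} \<times> {1,-1} \<times> PP n" "y \<in> {1,-1} \<times> {1,-1} \<times> PP n"
    and E0: "phiA x = phiA y"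
  obtain s t i j where x: "x = (s,t,i,j)" by (cases x)
  obtain s' t' i' j' where y: "y = (s',t',i',j')" by (cases y)
  have H: "(s,t,i,j) \<in> {1,-1} \<times> {1,-1} \<times> PP n" "(s',t',i',j') \<in> {1,-1} \<times> {1,-1} \<times> PP n"
    and E: "phiA (s,t,i,j) = phiA (s',t',i',j')" using H0 E0 x y by auto
  have ev: "\<And>m. s * (unitvec i m + t * unitvec j m) = s' * (unitvec i' m + t' * unitvec j' m)"
    using E unfolding phiA_def by (simp add: fun_eq_iff)
  have ij: "i < j" "i' < j'" using H by (auto simp: PP_def)
  have s0: "s \<noteq> 0" "s' \<noteq> 0" "t \<noteq> 0" "t' \<noteq> 0" using H by auto
  have a: "i = i' \<or> i = j'"
  proof (rule ccontr)
    assume "\<not> ?thesis"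
    then have "s = 0" using ev[of i] ij by (simp add: unitvec_def)
    then show False using s0 by simp
  qed
  have b: "i' = i \<or> i' = j"
  proof (rule ccontr)
    assume "\<not> ?thesis"
    then have "s' = 0" using ev[of i'] ij by (simp add: unitvec_def)
    then show False using s0 by simp
  qed
  have c: "i = i'" using a b ij by auto
  have d: "j = j'"
  proof (rule ccontr)
    assume "\<not> ?thesis"
    then have "s * t = 0" using ev[of j] ij c by (simp add: unitvec_def)
    then show False using s0 by simp
  qed
  have e: "s = s'" using ev[of i] ij c d by (simp add: unitvec_def)
  have "s * t = s' * t'" using ev[of j] ij c d by (simp add: unitvec_def)
  then have f: "t = t'" using e s0 by simp
  show "x = y" using c d e f x y by auto
qed

lemma phiB_inj: "inj_on phiB ({1,-1} \<times> {1..n})"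
proof (rule inj_onI)
  fix x y
  assume H0: "x \<in> {1,-1} \<times> {1..n}" "y \<in> {1,-1} \<times> {1..n}"
    and E0: "phiB x = phiB y"
  obtain s i where x: "x = (s,i)" by (cases x)
  obtain s' i' where y: "y = (s',i')" by (cases y)
  have H: "(s,i) \<in> {1,-1} \<times> {1..n}" "(s',i') \<in> {1,-1} \<times> {1..n}"
    and E: "phiB (s,i) = phiB (s',i')" using H0 E0 x y by auto
  have ev: "\<And>m. s * (2 * unitvec i m) = s' * (2* unitvec i' m)"
    using E unfolding phiB_def by (simp add: fun_eq_iff)
  have s0: "s \<noteq> 0" "s' \<noteq> 0" using H by auto
  have c: "i = i'"
  proof (rule ccontr)
    assume "\<not> ?thesis"
    then have "s = 0" using ev[of i] by (simp add: unitvec_def)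
    then show False using s0 by simp
  qed
  show "x = y" using ev[of i] c x y by (auto simp: unitvec_def)
qed

lemma AB_disj0:
  assumes H: "(s,t,i,j) \<in> {1,-1} \<times> {1,-1} \<times> PP n" "(s',i') \<in> {1,-1} \<times> {1..n}"
  shows "phiA (s,t,i,j) \<noteq> phiB (s',i')"
proof
  assume E: "phiA (s,t,i,j) = phiB (s',i')"
  have ev: "\<And>m. s * (unitvec i m + t * unitvec j m) = s' * (2* unitvec i' m)"
    using E unfolding phiA_def phiB_def by (simp add: fun_eq_iff)
  have ij: "i < j" using H by (auto simp: PP_def)
  have s0: "s \<noteq> 0" "t \<noteq> 0" using H by auto
  have "s = s' * (2* unitvec i' i)" using ev[of i] ij by (simp add: unitvec_def)
  then have 1: "i' = i" using s0 by (cases "i' = i") (auto simp: unitvec_def)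
  have "s * t = s' * (2* unitvec i' j)" using ev[of j] ij by (simp add: unitvec_def)
  then have 2: "i' = j" using s0 by (cases "i' = j") (auto simp: unitvec_def)
  show False using 1 2 ij by simp
qed

lemma AB_disj: "phiA ` ({1,-1} \<times> {1,-1} \<times> PP n) \<inter> phiB ` ({1,-1} \<times> {1..n}) = {}"
  using AB_disj0 by fastforce

lemma finite_delta: "finite (delta_p n)"
proof -
  have "finite (PP n)" unfolding PP_def
    by (rule finite_subset[of _ "{1..n} \<times> {1..n}"]) auto
  then show ?thesis unfolding delta_split by auto
qed

lemma sum_unitvec: assumes "i \<in> {1..n}" shows "(\<Sum>m=1..n. c m * unitvec i m) = c i"
proof -
  have "(\<Sum>m=1..n. c m * unitvec i m) = (\<Sum>m\<in>{1..n}. if m = i then c m else 0)"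
    by (rule sum.cong) (auto simp: unitvec_def)
  also have "\<dots> = c i" using assms by (simp add: sum.delta')
  finally show ?thesis .
qed

lemma dot_phiA: assumes "(i,j) \<in> PP n" shows "dotp n c (phiA (s,t,i,j)) = s * (c i + t * c j)"
proof -
  have ij: "i \<in> {1..n}" "j \<in> {1..n}" using assms by (auto simp: PP_def)
  have "dotp n c (phiA (s,t,i,j)) = (\<Sum>m=1..n. s * (c m * unitvec i m) + (s * t) * (c m * unitvec j m))"
    unfolding dotp_def phiA_def by (rule sum.cong) (auto simp: algebra_simps)
  also have "\<dots> = s * (\<Sum>m=1..n. c m * unitvec i m) + (s * t) * (\<Sum>m=1..n. c m * unitvec j m)"
    by (simp add: sum.distrib sum_distrib_left)
  also have "\<dots> = s * (c i + t * c j)"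
    by (simp only: sum_unitvec[OF ij(1)] sum_unitvec[OF ij(2)]) (simp add: algebra_simps)
  finally show ?thesis .
qed

lemma dot_phiB: assumes "i \<in> {1..n}" shows "dotp n c (phiB (s,i)) = s * (2 * c i)"
proof -
  have "dotp n c (phiB (s,i)) = (\<Sum>m=1..n. (2 * s) * (c m * unitvec i m))"
    unfolding dotp_def phiB_def by (rule sum.cong) (auto simp: algebra_simps)
  also have "\<dots> = (2 * s) * (\<Sum>m=1..n. c m * unitvec i m)"
    by (simp add: sum_distrib_left)
  also have "\<dots> = s * (2 * c i)"
    by (simp only: sum_unitvec[OF assms])
  finally show ?thesis .
qed

lemma finite_PP: "finite (PP n)" unfolding PP_def
  by (rule finite_subset[of _ "{1..n} \<times> {1..n}"]) auto

lemma four_max: "max 0 (x+y) + max 0 (x + -1*y) + max 0 (-1*(x+y)) + max 0 (-1*(x+ -1*y)) = 2 * max \<bar>x\<bar> \<bar>y\<bar>"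
  for x y :: real
  by (auto simp: max_def abs_if)

lemma sumA: "(\<Sum>x\<in>{1,-1} \<times> {1,-1} \<times> PP n. max 0 (dotp n c (phiA x)))
   = (\<Sum>(i,j)\<in>PP n. 2 * max \<bar>c i\<bar> \<bar>c j\<bar>)"
proof -
  let ?G = "\<lambda>x. max 0 (dotp n c (phiA x))"
  have "(\<Sum>x\<in>{1,-1} \<times> {1,-1} \<times> PP n. ?G x) = (\<Sum>s\<in>{1,-1}. \<Sum>y\<in>{1,-1} \<times> PP n. ?G (s,y))"
    by (simp add: sum.cartesian_product)
  also have "\<dots> = (\<Sum>s\<in>{1,-1}. \<Sum>t\<in>{1,-1}. \<Sum>p\<in>PP n. ?G (s,t,p))"
    by (simp add: sum.cartesian_product)
  also have "\<dots> = (\<Sum>p\<in>PP n. ?G (1,1,p) + ?G (1,-1,p) + ?G (-1,1,p) + ?G(-1,-1,p))"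
    by (simp add: sum.distrib)
  also have "\<dots> = (\<Sum>(i,j)\<in>PP n. 2 * max \<bar>c i\<bar> \<bar>c j\<bar>)"
  proof (rule sum.cong[OF refl], clarify)
    fix i j assume "(i,j) \<in> PP n"
    then show "?G (1,1,i,j) + ?G (1,-1,i,j) + ?G (-1,1,i,j) + ?G(-1,-1,i,j) = 2 * max \<bar>c i\<bar> \<bar>c j\<bar>"
      using four_max[of "c i" "c j"] by (simp add: dot_phiA)
  qed
  finally show ?thesis .
qed

lemma sumB: "(\<Sum>x\<in>{1,-1} \<times> {1..n}. max 0 (dotp n c (phiB x))) = (\<Sum>i=1..n. 2 * \<bar>c i\<bar>)"
proof -
  let ?G = "\<lambda>x. max 0 (dotp n c (phiB x))"
  have "(\<Sum>x\<in>{1,-1} \<times> {1..n}. ?G x) = (\<Sum>s\<in>{1,-1}. \<Sum>i\<in>{1..n}. ?G (s,i))"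
    by (simp add: sum.cartesian_product)
  also have "\<dots> = (\<Sum>i=1..n. ?G (1,i) + ?G (-1,i))"
    by (simp add: sum.distrib)
  also have "\<dots> = (\<Sum>i=1..n. 2 * \<bar>c i\<bar>)"
    by (rule sum.cong[OF refl]) (auto simp: dot_phiB max_def abs_if)
  finally show ?thesis .
qed

lemma Off_split: "Offd {1..n} = PP n \<union> (\<lambda>(i,j). (j,i)) ` PP n"
  unfolding Offd_def PP_def by (auto simp: image_def)

lemma sum_Off: fixes f :: "nat \<Rightarrow> nat \<Rightarrow> real"
  assumes sym: "\<And>i j. f i j = f j i"
  shows "(\<Sum>(i,j)\<in>Offd {1..n}. f i j) = (\<Sum>(i,j)\<in>PP n. 2 * f i j)"
proof -
  have d: "PP n \<inter> (\<lambda>(i,j). (j,i)) ` PP n = {}" unfolding PP_def by auto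
  have inj: "inj_on (\<lambda>(i,j). (j,i)) (PP n)" by (auto simp: inj_on_def)
  have "(\<Sum>(i,j)\<in>Offd {1..n}. f i j) = (\<Sum>(i,j)\<in>PP n. f i j) + (\<Sum>(i,j)\<in>(\<lambda>(i,j). (j,i)) ` PP n. f i j)"
    unfolding Off_split using d finite_PP by (simp add: sum.union_disjoint)
  also have "(\<Sum>(i,j)\<in>(\<lambda>(i,j). (j,i)) ` PP n. f i j) = (\<Sum>(i,j)\<in>PP n. f j i)"
    using sum.reindex[OF inj, of "\<lambda>(i,j). f i j"] by (simp add: case_prod_beta comp_def)
  also have "\<dots> = (\<Sum>(i,j)\<in>PP n. f i j)" using sym by simp
  finally show ?thesis by (simp add: sum.distrib[symmetric] case_prod_beta)
qed

lemma hsupp_formula: "hsupp n c = GG n (\<lambda>i. \<bar>c i\<bar>)"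
proof -
  have fin: "finite ({1,-1} \<times> {1,-1} \<times> PP n)" "finite ({1,-1::real} \<times> {1..n})" using finite_PP by auto
  have "hsupp n c = (\<Sum>\<alpha>\<in>phiA ` ({1,-1} \<times> {1,-1} \<times> PP n). max 0 (dotp n c \<alpha>))
        + (\<Sum>\<alpha>\<in>phiB ` ({1,-1} \<times> {1..n}). max 0 (dotp n c \<alpha>))"
    unfolding hsupp_def delta_split by (rule sum.union_disjoint) (use fin AB_disj[of n] in auto)
  also have "\<dots> = (\<Sum>x\<in>{1,-1} \<times> {1,-1} \<times> PP n. max 0 (dotp n c (phiA x)))
        + (\<Sum>x\<in>{1,-1} \<times> {1..n}. max 0 (dotp n c (phiB x)))"
    by (simp only: sum.reindex[OF phiA_inj] sum.reindex[OF phiB_inj] comp_def)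
  also have "\<dots> = (\<Sum>(i,j)\<in>PP n. 2 * max \<bar>c i\<bar> \<bar>c j\<bar>) + (\<Sum>i=1..n. 2 * \<bar>c i\<bar>)"
    by (simp only: sumA sumB)
  also have "\<dots> = GG n (\<lambda>i. \<bar>c i\<bar>)"
    unfolding GG_def by (subst sum_Off) (auto simp: sum_distrib_left max.commute)
  finally show ?thesis .
qed

definition FF :: "nat \<Rightarrow> nat \<Rightarrow> real" where
  "FF n k = 2 * real n * real k - (real k)^2 + real k"

lemma card_Offd: assumes "finite T" shows "real (card (Offd T)) = real (card T)^2 - real (card T)"
proof -
  have e: "Offd T = T \<times> T - (\<lambda>x. (x,x)) ` T" unfolding Offd_def by auto
  have sub: "(\<lambda>x. (x,x)) ` T \<subseteq> T \<times> T" by auto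
  have ci: "card ((\<lambda>x. (x,x)) ` T) = card T" by (rule card_image) (auto simp: inj_on_def)
  have "card (Offd T) = card T * card T - card T"
    unfolding e using assms sub ci by (simp add: card_Diff_subset card_cartesian_product)
  moreover have "card T \<le> card T * card T" by (cases "card T") auto
  ultimately show ?thesis by (simp add: of_nat_diff power2_eq_square)
qed

lemma GG_cong: assumes "\<And>i. i \<in> {1..n} \<Longrightarrow> g i = h i" shows "GG n g = GG n h"
  unfolding GG_def using assms by (auto intro!: sum.cong simp: Offd_def)

lemma GG_zero: assumes "\<And>i. i \<in> {1..n} \<Longrightarrow> g i = 0" shows "GG n g = 0"
  unfolding GG_def using assms by (auto intro!: sum.neutral simp: Offd_def)

lemma finite_Offd: "finite T \<Longrightarrow> finite (Offd T)"
  unfolding Offd_def by (rule finite_subset[of _ "T \<times> T"]) auto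

lemma GG_decomp:
  assumes S: "S \<subseteq> {1..n}" and m: "m \<ge> 0"
    and g0: "\<And>i. i \<in> {1..n} \<Longrightarrow> g i \<ge> 0"
    and gS: "\<And>i. i \<in> {1..n} \<Longrightarrow> i \<notin> S \<Longrightarrow> g i = 0"
  shows "GG n (\<lambda>i. m * (if i \<in> S then 1 else 0) + g i) = m * FF n (card S) + GG n g"
proof -
  let ?O = "Offd {1..n}"
  let ?P = "\<lambda>p. fst p \<in> S \<or> snd p \<in> S"
  have p1: "(\<Sum>i=1..n. m * (if i \<in> S then 1 else 0) + g i) = m * real (card S) + (\<Sum>i=1..n. g i)"
  proof -
    have "(\<Sum>i=1..n. m * (if i \<in> S then 1 else 0) + g i) = m * (\<Sum>i=1..n. (if i \<in> S then 1 else 0)) + (\<Sum>i=1..n. g i)"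
      by (simp add: sum.distrib sum_distrib_left)
    moreover have "(\<Sum>i=1..n. (if i \<in> S then 1 else 0::real)) = real (card S)"
    proof -
      have "(\<Sum>i=1..n. (if i \<in> S then 1 else 0::real)) = (\<Sum>i\<in>{i\<in>{1..n}. i \<in> S}. 1)"
        using sum.inter_filter[of "{1..n}" "\<lambda>_. 1::real" "\<lambda>i. i \<in> S"] by simp
      also have "{i\<in>{1..n}. i \<in> S} = S" using S by auto
      finally show ?thesis by simp
    qed
    ultimately show ?thesis by simp
  qed
  have pw: "max (m * (if i \<in> S then 1 else 0) + g i) (m * (if j \<in> S then 1 else 0) + g j)
      = (if ?P (i,j) then m else 0) + max (g i) (g j)" if "(i,j) \<in> ?O" for i j
  proof -
    have ij: "i \<in> {1..n}" "j \<in> {1..n}" using that by (auto simp: Offd_def)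
    show ?thesis using g0[OF ij(1)] g0[OF ij(2)] gS[OF ij(1)] gS[OF ij(2)] m
      by (auto simp: max_def)
  qed
  have p2: "(\<Sum>(i,j)\<in>?O. max (m * (if i \<in> S then 1 else 0) + g i) (m * (if j \<in> S then 1 else 0) + g j))
     = m * real (card {p \<in> ?O. ?P p}) + (\<Sum>(i,j)\<in>?O. max (g i) (g j))"
  proof -
    have "(\<Sum>(i,j)\<in>?O. max (m * (if i \<in> S then 1 else 0) + g i) (m * (if j \<in> S then 1 else 0) + g j))
        = (\<Sum>p\<in>?O. (if ?P p then m else 0) + (case p of (i,j) \<Rightarrow> max (g i) (g j)))"
    proof (rule sum.cong[OF refl])
      fix p assume "p \<in> ?O"
      then show "(case p of (i,j) \<Rightarrow> max (m * (if i \<in> S then 1 else 0) + g i) (m * (if j \<in> S then 1 else 0) + g j))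
          = (if ?P p then m else 0) + (case p of (i,j) \<Rightarrow> max (g i) (g j))"
        using pw by (cases p) simp
    qed
    also have "\<dots> = (\<Sum>p\<in>?O. (if ?P p then m else 0)) + (\<Sum>(i,j)\<in>?O. max (g i) (g j))"
      by (simp add: sum.distrib)
    also have "(\<Sum>p\<in>?O. (if ?P p then m else 0)) = m * real (card {p \<in> ?O. ?P p})"
      using finite_Offd[of "{1..n}"] by (simp add: sum.inter_filter[symmetric])
    finally show ?thesis .
  qed
  have cP: "real (card {p \<in> ?O. ?P p}) = real n ^ 2 - real n - ((real n - real (card S))^2 - (real n - real (card S)))"
  proof -
    have e: "{p \<in> ?O. ?P p} = ?O - Offd ({1..n} - S)" unfolding Offd_def by auto
    have sub: "Offd ({1..n} - S) \<subseteq> ?O" unfolding Offd_def by auto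
    have fin: "finite (Offd ({1..n} - S))" by (rule finite_Offd) auto
    have c1: "card {p \<in> ?O. ?P p} = card ?O - card (Offd ({1..n} - S))"
      unfolding e using sub fin by (simp add: card_Diff_subset)
    have le: "card (Offd ({1..n} - S)) \<le> card ?O" using sub finite_Offd[of "{1..n}"] by (simp add: card_mono)
    have cs: "card ({1..n} - S) = n - card S" using S by (simp add: card_Diff_subset finite_subset)
    have csn: "card S \<le> n" using S by (metis card_atLeastAtMost card_mono diff_Suc_1 finite_atLeastAtMost)
    have "real (card {p \<in> ?O. ?P p}) = real (card ?O) - real (card (Offd ({1..n} - S)))"
      using c1 le by (simp add: of_nat_diff)
    also have "\<dots> = real n ^ 2 - real n - ((real n - real (card S))^2 - (real n - real (card S)))"
      using card_Offd[of "{1..n}"] card_Offd[of "{1..n} - S"] cs csn by (simp add: of_nat_diff)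
    finally show ?thesis .
  qed
  show ?thesis
    unfolding GG_def p1 p2 cP FF_def by (simp add: algebra_simps power2_eq_square)
qed

lemma GG_bound_aux:
  assumes Hall: "\<And>S. S \<subseteq> {1..n} \<Longrightarrow> (\<Sum>i\<in>S. d i) \<le> FF n (card S)"
  shows "\<And>g. card {i\<in>{1..n}. g i \<noteq> 0} = N \<Longrightarrow> (\<forall>i\<in>{1..n}. g i \<ge> 0) \<Longrightarrow> (\<Sum>i=1..n. g i * d i) \<le> GG n g"
proof (induction N rule: less_induct)
  case (less N g)
  let ?S = "{i\<in>{1..n}. g i \<noteq> 0}"
  show ?case
  proof (cases "?S = {}")
    case True
    then have z: "\<And>i. i \<in> {1..n} \<Longrightarrow> g i = 0" by auto
    then have "(\<Sum>i=1..n. g i * d i) = 0" by simp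
    moreover have "GG n g = 0" using GG_zero z by blast
    ultimately show ?thesis by simp
  next
    case False
    have finS: "finite ?S" by auto
    define m where "m = Min (g ` ?S)"
    have mS: "m \<in> g ` ?S" unfolding m_def using finS False by (intro Min_in) auto
    then obtain i0 where i0: "i0 \<in> ?S" "g i0 = m" by auto
    have mle: "\<And>i. i \<in> ?S \<Longrightarrow> m \<le> g i" unfolding m_def using finS by auto
    have mpos: "m \<ge> 0" using i0 less.prems(2) by auto
    define g' where "g' = (\<lambda>i. g i - m * (if i \<in> ?S then 1 else 0))"
    have geq: "g = (\<lambda>i. m * (if i \<in> ?S then 1 else 0) + g' i)" unfolding g'_def by auto
    have g'0: "\<And>i. i \<in> {1..n} \<Longrightarrow> g' i \<ge> 0" unfolding g'_def using mle less.prems(2) by auto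
    have g'S: "\<And>i. i \<in> {1..n} \<Longrightarrow> i \<notin> ?S \<Longrightarrow> g' i = 0" unfolding g'_def by auto
    have sub: "{i\<in>{1..n}. g' i \<noteq> 0} \<subseteq> ?S - {i0}" unfolding g'_def using i0 by auto
    have cardlt: "card {i\<in>{1..n}. g' i \<noteq> 0} < N"
    proof -
      have "card {i\<in>{1..n}. g' i \<noteq> 0} \<le> card (?S - {i0})" using sub finS by (intro card_mono) auto
      also have "\<dots> < card ?S" by (rule card_Diff1_less[OF finS i0(1)])
      finally show ?thesis using less.prems(1) by simp
    qed
    have IH: "(\<Sum>i=1..n. g' i * d i) \<le> GG n g'"
      using less.IH[OF cardlt refl] g'0 by auto
    have "(\<Sum>i=1..n. g i * d i) = (\<Sum>i=1..n. m * (if i \<in> ?S then d i else 0) + g' i * d i)"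
      by (rule sum.cong) (auto simp: g'_def algebra_simps)
    also have "\<dots> = m * (\<Sum>i=1..n. (if i \<in> ?S then d i else 0)) + (\<Sum>i=1..n. g' i * d i)"
      by (simp add: sum.distrib sum_distrib_left)
    also have "(\<Sum>i=1..n. (if i \<in> ?S then d i else 0)) = (\<Sum>i\<in>?S. d i)"
      using sum.inter_filter[of "{1..n}" d "\<lambda>i. g i \<noteq> 0"] by simp
    also have "m * (\<Sum>i\<in>?S. d i) \<le> m * FF n (card ?S)"
    proof -
      have "?S \<subseteq> {1..n}" by blast
      from Hall[OF this] mpos show ?thesis by (intro mult_left_mono) auto
    qed
    finally have "(\<Sum>i=1..n. g i * d i) \<le> m * FF n (card ?S) + GG n g'" using IH by simp
    also have "\<dots> = GG n g"
      by (subst (2) geq, rule GG_decomp[symmetric]) (use mpos g'0 g'S in auto)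
    finally show ?thesis .
  qed
qed

lemma GG_bound:
  assumes Hall: "\<And>S. S \<subseteq> {1..n} \<Longrightarrow> (\<Sum>i\<in>S. d i) \<le> FF n (card S)"
    and "\<forall>i\<in>{1..n}. g i \<ge> 0"
  shows "(\<Sum>i=1..n. g i * d i) \<le> GG n g"
  using GG_bound_aux[OF Hall refl assms(2)] .

lemma GG_indicator:
  assumes S: "S \<subseteq> {1..n}"
  shows "GG n (\<lambda>i. if i \<in> S then 1 else 0) = FF n (card S)"
proof -
  have "GG n (\<lambda>i. if i \<in> S then 1 else 0) = GG n (\<lambda>i. 1 * (if i \<in> S then 1 else 0) + (\<lambda>_. 0) i)" by simp
  also have "\<dots> = 1 * FF n (card S) + GG n (\<lambda>_. 0)" by (rule GG_decomp) (use S in auto)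
  also have "GG n (\<lambda>_. 0) = 0" by (rule GG_zero) auto
  finally show ?thesis by simp
qed

lemma weak_dual:
  assumes b: "\<forall>\<alpha>\<in>delta_p n. 0 \<le> b \<alpha> \<and> b \<alpha> \<le> 1"
    and mu: "\<forall>m\<in>{1..n}. mu m = (\<Sum>\<alpha>\<in>delta_p n. b \<alpha> * \<alpha> m)"
  shows "dotp n c mu \<le> hsupp n c"
proof -
  have "dotp n c mu = (\<Sum>m=1..n. c m * (\<Sum>\<alpha>\<in>delta_p n. b \<alpha> * \<alpha> m))"
    unfolding dotp_def using mu by (intro sum.cong) auto
  also have "\<dots> = (\<Sum>m=1..n. \<Sum>\<alpha>\<in>delta_p n. c m * (b \<alpha> * \<alpha> m))"
    by (simp add: sum_distrib_left)
  also have "\<dots> = (\<Sum>\<alpha>\<in>delta_p n. \<Sum>m=1..n. c m * (b \<alpha> * \<alpha> m))"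
    by (rule sum.swap)
  also have "\<dots> = (\<Sum>\<alpha>\<in>delta_p n. b \<alpha> * dotp n c \<alpha>)"
    unfolding dotp_def by (simp add: sum_distrib_left mult_ac)
  also have "\<dots> \<le> (\<Sum>\<alpha>\<in>delta_p n. max 0 (dotp n c \<alpha>))"
  proof (rule sum_mono)
    fix \<alpha> assume "\<alpha> \<in> delta_p n"
    then have "0 \<le> b \<alpha>" "b \<alpha> \<le> 1" using b by auto
    then show "b \<alpha> * dotp n c \<alpha> \<le> max 0 (dotp n c \<alpha>)"
      by (cases "dotp n c \<alpha> \<ge> 0") (auto simp: mult_left_le_one_le mult_nonneg_nonpos max_def mult_le_cancel_right1)
  qed
  finally show ?thesis unfolding hsupp_def .
qed

lemma sum_upd:
  fixes b :: "(nat \<Rightarrow> real) \<Rightarrow> real"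
  assumes "finite D" "\<alpha> \<in> D"
  shows "(\<Sum>\<beta>\<in>D. (b(\<alpha> := v)) \<beta> * \<beta> m) = (\<Sum>\<beta>\<in>D. b \<beta> * \<beta> m) + (v - b \<alpha>) * \<alpha> m"
proof -
  have "(\<Sum>\<beta>\<in>D. (b(\<alpha> := v)) \<beta> * \<beta> m) = (\<Sum>\<beta>\<in>D. b \<beta> * \<beta> m + (if \<beta> = \<alpha> then (v - b \<alpha>) * \<alpha> m else 0))"
    by (rule sum.cong) (auto simp: left_diff_distrib)
  also have "\<dots> = (\<Sum>\<beta>\<in>D. b \<beta> * \<beta> m) + (v - b \<alpha>) * \<alpha> m"
    using assms by (simp add: sum.distrib)
  finally show ?thesis .
qed

lemma sq_expand:
  "(\<Sum>m=1..n. (r m - t * a m)^2) = (\<Sum>m=1..n. (r m)^2) - 2 * t * (\<Sum>m=1..n. r m * a m) + t^2 * (\<Sum>m=1..n. (a m)^2)"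
  for r a :: "nat \<Rightarrow> real"
proof -
  have "(\<Sum>m=1..n. (r m - t * a m)^2) = (\<Sum>m=1..n. (r m)^2 - (2 * t) * (r m * a m) + t^2 * (a m)^2)"
    by (rule sum.cong) (auto simp: power2_eq_square algebra_simps)
  also have "\<dots> = (\<Sum>m=1..n. (r m)^2) - 2 * t * (\<Sum>m=1..n. r m * a m) + t^2 * (\<Sum>m=1..n. (a m)^2)"
    by (simp add: sum.distrib sum_subtractf sum_distrib_left)
  finally show ?thesis .
qed

lemma strong_dual:
  assumes dual: "\<And>c. dotp n c mu \<le> hsupp n c"
  shows "in_R_delta_p n mu"
proof -
  define D where "D = delta_p n"
  have finD: "finite D" unfolding D_def by (rule finite_delta)
  define Phi where "Phi = (\<lambda>b. (\<Sum>m=1..n. (mu m - (\<Sum>\<alpha>\<in>D. b \<alpha> * \<alpha> m))^2))"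
  define K where "K = PiE D (\<lambda>_. {0..1::real})"
  define X where "X = product_topology (\<lambda>_. euclideanreal) D"
  have cK: "compactin X K" unfolding K_def X_def by (simp add: compactin_PiE)
  have cont: "continuous_map X euclideanreal Phi"
    unfolding Phi_def X_def
    by (intro continuous_intros finD) (auto intro: continuous_map_product_projection)
  have cI: "compact (Phi ` K)" using image_compactin[OF cK cont] by simp
  have Kne: "K \<noteq> {}"
  proof -
    have "restrict (\<lambda>_. 0) D \<in> K" unfolding K_def by auto
    then show ?thesis by blast
  qed
  obtain b0 where b0K: "b0 \<in> K" and b0min: "\<And>b. b \<in> K \<Longrightarrow> Phi b0 \<le> Phi b"
    using compact_attains_inf[OF cI] Kne by auto
  have b01: "\<And>\<alpha>. \<alpha> \<in> D \<Longrightarrow> 0 \<le> b0 \<alpha> \<and> b0 \<alpha> \<le> 1" using b0K unfolding K_def by auto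
  define r where "r = (\<lambda>m. mu m - (\<Sum>\<alpha>\<in>D. b0 \<alpha> * \<alpha> m))"
  have Phi0: "Phi b0 = (\<Sum>m=1..n. (r m)^2)" unfolding Phi_def r_def ..
  have pert: "Phi (b0(\<alpha> := v)) = Phi b0 - 2 * (v - b0 \<alpha>) * dotp n r \<alpha> + (v - b0 \<alpha>)^2 * (\<Sum>m=1..n. (\<alpha> m)^2)"
    if "\<alpha> \<in> D" for \<alpha> v
  proof -
    have "Phi (b0(\<alpha> := v)) = (\<Sum>m=1..n. (r m - (v - b0 \<alpha>) * \<alpha> m)^2)"
      unfolding Phi_def r_def
      by (intro sum.cong refl, simp only: sum_upd[OF finD that]) (simp add: algebra_simps)
    also have "\<dots> = Phi b0 - 2 * (v - b0 \<alpha>) * dotp n r \<alpha> + (v - b0 \<alpha>)^2 * (\<Sum>m=1..n. (\<alpha> m)^2)"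
      unfolding Phi0 dotp_def by (rule sq_expand)
    finally show ?thesis .
  qed
  have inK: "b0(\<alpha> := v) \<in> K" if "\<alpha> \<in> D" "0 \<le> v" "v \<le> 1" for \<alpha> v
    using b0K that unfolding K_def by (auto simp: PiE_def Pi_def extensional_def)
  have key: "b0 \<alpha> * dotp n r \<alpha> = max 0 (dotp n r \<alpha>)" if aD: "\<alpha> \<in> D" for \<alpha>
  proof -
    let ?q = "dotp n r \<alpha>"
    let ?Q = "(\<Sum>m=1..n. (\<alpha> m)^2)"
    have Q0: "?Q \<ge> 0" by (intro sum_nonneg) auto
    have ba: "0 \<le> b0 \<alpha>" "b0 \<alpha> \<le> 1" using b01[OF aD] by auto
    consider "?q > 0" | "?q < 0" | "?q = 0" by linarith
    then show ?thesis
    proof cases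
      case 1
      have "b0 \<alpha> = 1"
      proof (rule ccontr)
        assume "b0 \<alpha> \<noteq> 1"
        then have lt: "b0 \<alpha> < 1" using ba by auto
        define t where "t = min (1 - b0 \<alpha>) (?q / (?Q + 1))"
        have tpos: "t > 0" unfolding t_def using lt 1 Q0 by auto
        have t1: "t \<le> 1 - b0 \<alpha>" unfolding t_def by auto
        have "t \<le> ?q / (?Q + 1)" unfolding t_def by simp
        then have t2: "t * (?Q + 1) \<le> ?q" using Q0 by (simp add: pos_le_divide_eq)
        have "t * ?Q \<le> ?q - t" using t2 by (simp add: algebra_simps)
        then have "t * (t * ?Q) \<le> t * (?q - t)" using tpos by (intro mult_left_mono) auto
        then have a1: "t^2 * ?Q \<le> t * ?q - t^2" by (simp add: power2_eq_square algebra_simps)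
        have a2: "t^2 > 0" using tpos by simp
        have a3: "t * ?q > 0" using tpos 1 by simp
        have ineq: "t^2 * ?Q < 2 * t * ?q" using a1 a2 a3 by linarith
        have "Phi (b0(\<alpha> := b0 \<alpha> + t)) = Phi b0 - 2 * t * ?q + t^2 * ?Q"
          using pert[OF aD, of "b0 \<alpha> + t"] by simp
        also have "\<dots> < Phi b0" using ineq by simp
        finally have "Phi (b0(\<alpha> := b0 \<alpha> + t)) < Phi b0" .
        moreover have "b0(\<alpha> := b0 \<alpha> + t) \<in> K" using ba tpos t1 by (intro inK[OF aD]) auto
        then have "Phi b0 \<le> Phi (b0(\<alpha> := b0 \<alpha> + t))" by (rule b0min)
        ultimately show False by linarith
      qed
      then show ?thesis using 1 by simp
    next
      case 2
      have "b0 \<alpha> = 0"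
      proof (rule ccontr)
        assume "b0 \<alpha> \<noteq> 0"
        then have lt: "b0 \<alpha> > 0" using ba by auto
        define t where "t = min (b0 \<alpha>) (- ?q / (?Q + 1))"
        have "- ?q / (?Q + 1) > 0" using 2 Q0 by (intro divide_pos_pos) auto
        then have tpos: "t > 0" unfolding t_def using lt by (simp only: min_def) auto
        have t1: "t \<le> b0 \<alpha>" unfolding t_def by auto
        have tl: "t \<le> - ?q / (?Q + 1)" unfolding t_def by (rule min.cobounded2)
        have Qp: "?Q + 1 > 0" using Q0 by simp
        have t2: "t * (?Q + 1) \<le> - ?q" using tl pos_le_divide_eq[OF Qp, of t "- ?q"] by blast
        have "t * ?Q \<le> - ?q - t" using t2 by (simp add: algebra_simps)
        then have "t * (t * ?Q) \<le> t * (- ?q - t)" using tpos by (intro mult_left_mono) auto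
        then have a1: "t^2 * ?Q \<le> t * (- ?q) - t^2" by (simp add: power2_eq_square algebra_simps)
        have a2: "t^2 > 0" using tpos by simp
        have a3: "t * (- ?q) > 0" using tpos 2 by (intro mult_pos_pos) auto
        have ineq: "t^2 * ?Q < - 2 * t * ?q" using a1 a2 a3 by linarith
        have "Phi (b0(\<alpha> := b0 \<alpha> - t)) = Phi b0 + 2 * t * ?q + t^2 * ?Q"
          using pert[OF aD, of "b0 \<alpha> - t"] by (simp add: power2_eq_square algebra_simps)
        also have "\<dots> < Phi b0" using ineq by simp
        finally have "Phi (b0(\<alpha> := b0 \<alpha> - t)) < Phi b0" .
        moreover have "b0(\<alpha> := b0 \<alpha> - t) \<in> K" using ba tpos t1 by (intro inK[OF aD]) auto
        then have "Phi b0 \<le> Phi (b0(\<alpha> := b0 \<alpha> - t))" by (rule b0min)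
        ultimately show False by linarith
      qed
      then show ?thesis using 2 by simp
    next
      case 3
      then show ?thesis by simp
    qed
  qed
  have "dotp n r mu = (\<Sum>m=1..n. r m * (r m + (\<Sum>\<alpha>\<in>D. b0 \<alpha> * \<alpha> m)))"
    unfolding dotp_def r_def by simp
  also have "\<dots> = (\<Sum>m=1..n. (r m)^2) + (\<Sum>m=1..n. \<Sum>\<alpha>\<in>D. r m * (b0 \<alpha> * \<alpha> m))"
    by (simp add: algebra_simps power2_eq_square sum.distrib sum_distrib_left)
  also have "(\<Sum>m=1..n. \<Sum>\<alpha>\<in>D. r m * (b0 \<alpha> * \<alpha> m)) = (\<Sum>\<alpha>\<in>D. \<Sum>m=1..n. r m * (b0 \<alpha> * \<alpha> m))"
    by (rule sum.swap)
  also have "\<dots> = (\<Sum>\<alpha>\<in>D. b0 \<alpha> * dotp n r \<alpha>)"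
    unfolding dotp_def by (simp add: sum_distrib_left mult_ac)
  also have "(\<Sum>\<alpha>\<in>D. b0 \<alpha> * dotp n r \<alpha>) = hsupp n r"
    unfolding hsupp_def D_def[symmetric] using key by (intro sum.cong) auto
  finally have "Phi b0 \<le> 0" using dual[of r] Phi0 by simp
  moreover have "Phi b0 \<ge> 0" unfolding Phi0 by (intro sum_nonneg) auto
  ultimately have "(\<Sum>m=1..n. (r m)^2) = 0" using Phi0 by simp
  then have r0: "\<And>m. m \<in> {1..n} \<Longrightarrow> r m = 0"
    using sum_nonneg_eq_0_iff[of "{1..n}" "\<lambda>m. (r m)^2"] by auto
  show ?thesis unfolding in_R_delta_p_def
  proof (intro exI[of _ b0] conjI ballI)
    fix \<alpha> assume "\<alpha> \<in> delta_p n"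
    then show "0 \<le> b0 \<alpha>" "b0 \<alpha> \<le> 1" using b01 D_def by auto
  next
    fix m assume "m \<in> {1..n}"
    then show "mu m = (\<Sum>\<alpha>\<in>delta_p n. b0 \<alpha> * \<alpha> m)" using r0 unfolding r_def D_def by auto
  qed
qed

lemma top_k:
  fixes d :: "nat \<Rightarrow> real"
  assumes dm: "\<And>i j. 1 \<le> i \<Longrightarrow> i \<le> j \<Longrightarrow> j \<le> n \<Longrightarrow> d j \<le> d i"
    and S: "S \<subseteq> {1..n}"
  shows "(\<Sum>i\<in>S. d i) \<le> (\<Sum>i=1..card S. d i)"
proof -
  define k where "k = card S"
  have finS: "finite S" using S finite_subset by blast
  have kn: "k \<le> n" unfolding k_def using card_mono[OF _ S] by simp
  show ?thesis
  proof (cases "k = 0")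
    case True
    then have "S = {}" using finS k_def by simp
    then show ?thesis by simp
  next
    case False
    define T where "T = {1..k}"
    have finT: "finite T" unfolding T_def by simp
    have cT: "card T = k" unfolding T_def by simp
    have e1: "(\<Sum>i\<in>S. d i) = (\<Sum>i\<in>S \<inter> T. d i) + (\<Sum>i\<in>S - T. d i)"
      using finS by (rule sum.Int_Diff)
    have e2: "(\<Sum>i\<in>T. d i) = (\<Sum>i\<in>T \<inter> S. d i) + (\<Sum>i\<in>T - S. d i)"
      using finT by (rule sum.Int_Diff)
    have c1: "card S = card (S \<inter> T) + card (S - T)"
      using finS by (metis card_Int_Diff finT finite_Int)
    have c2: "card T = card (T \<inter> S) + card (T - S)"
      using finT by (metis card_Int_Diff finS finite_Int)
    have cc: "card (S - T) = card (T - S)" using c1 c2 cT k_def by (simp add: Int_commute)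
    have b1: "(\<Sum>i\<in>S - T. d i) \<le> of_nat (card (S - T)) * d k"
    proof (rule sum_bounded_above)
      fix i assume "i \<in> S - T"
      then have "k \<le> i" "i \<le> n" using S unfolding T_def by auto
      then show "d i \<le> d k" using dm False by simp
    qed
    have b2: "of_nat (card (T - S)) * d k \<le> (\<Sum>i\<in>T - S. d i)"
    proof (rule sum_bounded_below)
      fix i assume "i \<in> T - S"
      then have "1 \<le> i" "i \<le> k" unfolding T_def by auto
      then show "d k \<le> d i" using dm kn by simp
    qed
    have "(\<Sum>i\<in>S. d i) \<le> (\<Sum>i\<in>T. d i)" using e1 e2 b1 b2 cc by (simp add: Int_commute)
    then show ?thesis unfolding T_def k_def .
  qed
qed

lemma dom_mono:
  assumes "k_dominant n a"
  shows "1 \<le> i \<Longrightarrow> i \<le> j \<Longrightarrow> j \<le> n - 1 \<Longrightarrow> a j \<le> a i"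
proof (induction j)
  case 0 then show ?case by simp
next
  case (Suc j)
  show ?case
  proof (cases "i = Suc j")
    case True then show ?thesis by simp
  next
    case False
    then have "i \<le> j" "j \<le> n - 1" using Suc.prems by auto
    then have "a j \<le> a i" using Suc.IH Suc.prems by auto
    moreover have "a (Suc j) \<le> a j" using assms Suc.prems \<open>i \<le> j\<close> unfolding k_dominant_def
      by (metis Suc_eq_plus1 Suc_le_eq le_trans)
    ultimately show ?thesis by simp
  qed
qed

lemma dot_ind: assumes "k \<le> n"
  shows "dotp n (\<lambda>i. if i \<in> {1..k} then 1 else 0) a = (\<Sum>i=1..k. a i)"
proof -
  have "dotp n (\<lambda>i. if i \<in> {1..k} then 1 else 0) a = (\<Sum>i=1..n. if i \<in> {1..k} then a i else 0)"
    unfolding dotp_def by (rule sum.cong) auto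
  also have "\<dots> = (\<Sum>i\<in>{i\<in>{1..n}. i \<in> {1..k}}. a i)"
    using sum.inter_filter[of "{1..n}" a "\<lambda>i. i \<in> {1..k}"] by simp
  also have "{i\<in>{1..n}. i \<in> {1..k}} = {1..k}" using assms by auto
  finally show ?thesis .
qed

lemma sum_last: fixes n :: nat and f :: "nat \<Rightarrow> real" assumes "n \<ge> 1" shows "(\<Sum>i=1..n. f i) = (\<Sum>i=1..n-1. f i) + (f n :: real)"
proof -
  have "n = Suc (n - 1)" using assms by simp
  then have "(\<Sum>i=1..n. f i) = (\<Sum>i=1..Suc (n-1). f i)" by simp
  also have "\<dots> = (\<Sum>i=1..n-1. f i) + f (Suc (n-1))" by simp
  finally show ?thesis using \<open>n = Suc (n - 1)\<close> by simp
qed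

lemma dot_last: assumes "n \<ge> 1"
  shows "dotp n (\<lambda>i. if i = n then -1 else 1) a = (\<Sum>i=1..n-1. a i) - a n"
proof -
  have "dotp n (\<lambda>i. if i = n then -1 else 1) a = (\<Sum>i=1..n-1. (if i = n then -1 else 1) * a i) + (- a n)"
    unfolding dotp_def using sum_last[OF assms] by simp
  also have "(\<Sum>i=1..n-1. (if i = n then -1 else 1) * a i) = (\<Sum>i=1..n-1. a i)"
    by (rule sum.cong) auto
  finally show ?thesis by simp
qed

theorem mainTheorem10:
  fixes n :: nat and a :: "nat \<Rightarrow> real"
  assumes "n \<ge> 2"
    and "k_dominant n a"
    and "int_or_half_int n a"
  shows "(in_R_delta_p n a \<longleftrightarrow>
            ((\<forall>k\<in>{1..n}. (\<Sum>i=1..k. a i) \<le> real (2*n*k) - real (k^2) + real k) \<and>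
             (\<Sum>i=1..n-1. a i) - a n \<le> real (n^2 + n)))
         \<and> (a 1 \<le> real n + 1 \<longrightarrow> u_small n a)"
proof -
  have n1: "n \<ge> 1" using assms(1) by simp
  have mono: "\<And>i j. 1 \<le> i \<Longrightarrow> i \<le> j \<Longrightarrow> j \<le> n - 1 \<Longrightarrow> a j \<le> a i"
    using dom_mono[OF assms(2)] by blast
  have an: "\<bar>a n\<bar> \<le> a (n - 1)" using assms(2) unfolding k_dominant_def by blast
  have nonneg: "\<And>i. 1 \<le> i \<Longrightarrow> i \<le> n - 1 \<Longrightarrow> a i \<ge> 0"
  proof -
    fix i assume "1 \<le> i" "i \<le> n - 1"
    then have "a (n-1) \<le> a i" using mono by blast
    then show "a i \<ge> 0" using an by linarith
  qed
  define d where "d = (\<lambda>i. \<bar>a i\<bar>)"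
  have dA: "\<And>i. 1 \<le> i \<Longrightarrow> i \<le> n - 1 \<Longrightarrow> d i = a i" unfolding d_def using nonneg by auto
  have dm: "\<And>i j. 1 \<le> i \<Longrightarrow> i \<le> j \<Longrightarrow> j \<le> n \<Longrightarrow> d j \<le> d i"
  proof -
    fix i j assume ij: "1 \<le> i" "i \<le> j" "j \<le> n"
    show "d j \<le> d i"
    proof (cases "j = n")
      case True
      show ?thesis
      proof (cases "i = n")
        case True then show ?thesis using \<open>j = n\<close> by simp
      next
        case False
        then have "i \<le> n - 1" using ij by auto
        then have "a (n-1) \<le> a i" using mono ij by auto
        then show ?thesis using an dA[OF ij(1) \<open>i \<le> n - 1\<close>] \<open>j = n\<close> unfolding d_def by simp
      qed
    next
      case False
      then have "j \<le> n - 1" using ij by auto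
      then show ?thesis using mono[of i j] dA[of i] dA[of j] ij by auto
    qed
  qed
  let ?C = "(\<forall>k\<in>{1..n}. (\<Sum>i=1..k. a i) \<le> real (2*n*k) - real (k^2) + real k) \<and>
             (\<Sum>i=1..n-1. a i) - a n \<le> real (n^2 + n)"
  have FFe: "\<And>k. FF n k = real (2*n*k) - real (k^2) + real k" unfolding FF_def by simp
  have iff: "in_R_delta_p n a \<longleftrightarrow> ?C"
  proof
    assume R: "in_R_delta_p n a"
    then obtain b where b: "\<forall>\<alpha>\<in>delta_p n. 0 \<le> b \<alpha> \<and> b \<alpha> \<le> 1"
      "\<forall>m\<in>{1..n}. a m = (\<Sum>\<alpha>\<in>delta_p n. b \<alpha> * \<alpha> m)" unfolding in_R_delta_p_def by blast
    have wd: "\<And>c. dotp n c a \<le> hsupp n c" using weak_dual[OF b] .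
    have part1: "(\<Sum>i=1..k. a i) \<le> real (2*n*k) - real (k^2) + real k" if k: "k \<in> {1..n}" for k
    proof -
      let ?c = "\<lambda>i. if i \<in> {1..k} then 1 else (0::real)"
      have kn: "k \<le> n" using k by simp
      have "hsupp n ?c = GG n (\<lambda>i. \<bar>?c i\<bar>)" by (rule hsupp_formula)
      also have "(\<lambda>i. \<bar>?c i\<bar>) = ?c" by auto
      also have "GG n ?c = FF n (card {1..k})" using kn by (intro GG_indicator) auto
      finally have "hsupp n ?c = FF n k" by simp
      then show ?thesis using wd[of ?c] dot_ind[OF kn, of a] FFe[of k] by simp
    qed
    have part2: "(\<Sum>i=1..n-1. a i) - a n \<le> real (n^2 + n)"
    proof -
      let ?c = "\<lambda>i. if i = n then -1 else (1::real)"
      have "hsupp n ?c = GG n (\<lambda>i. \<bar>?c i\<bar>)" by (rule hsupp_formula)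
      also have "\<dots> = GG n (\<lambda>i. if i \<in> {1..n} then 1 else 0)" by (rule GG_cong) auto
      also have "\<dots> = FF n (card {1..n})" by (intro GG_indicator) auto
      finally have "hsupp n ?c = FF n n" by simp
      moreover have "FF n n = real (n^2 + n)" unfolding FF_def by (simp add: power2_eq_square)
      ultimately show ?thesis using wd[of ?c] dot_last[OF n1, of a] by simp
    qed
    show ?C using part1 part2 by blast
  next
    assume C: ?C
    have pre: "(\<Sum>i=1..k. d i) \<le> FF n k" if "k \<le> n" for k
    proof (cases "k = n")
      case True
      have "(\<Sum>i=1..n-1. d i) = (\<Sum>i=1..n-1. a i)" by (rule sum.cong) (auto simp: dA)
      then have s1: "(\<Sum>i=1..n. d i) = (\<Sum>i=1..n-1. a i) + \<bar>a n\<bar>"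
        using sum_last[OF n1, of d] unfolding d_def by simp
      have "n \<in> {1..n}" using n1 by simp
      then have c1: "(\<Sum>i=1..n. a i) \<le> real (2*n*n) - real (n^2) + real n" using C by blast
      have c2: "(\<Sum>i=1..n. a i) = (\<Sum>i=1..n-1. a i) + a n" using sum_last[OF n1] .
      have "FF n n = real (n^2 + n)" unfolding FF_def by (simp add: power2_eq_square)
      moreover have "(\<Sum>i=1..n-1. a i) - a n \<le> real (n^2 + n)" using C by blast
      moreover have "real (2*n*n) - real (n^2) + real n = real (n^2 + n)" by (simp add: power2_eq_square)
      ultimately show ?thesis using True s1 c1 c2 by (cases "a n \<ge> 0") auto
    next
      case False
      then have kn: "k \<le> n - 1" using that by auto
      show ?thesis
      proof (cases "k = 0")
        case True then show ?thesis by (simp add: FF_def)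
      next
        case False
        have "(\<Sum>i=1..k. d i) = (\<Sum>i=1..k. a i)" using dA kn by (intro sum.cong) auto
        also have "\<dots> \<le> FF n k"
        proof -
          have "k \<in> {1..n}" using False kn by auto
          then have "(\<Sum>i=1..k. a i) \<le> real (2*n*k) - real (k^2) + real k" using C by blast
          then show ?thesis using FFe[of k] by simp
        qed
        finally show ?thesis .
      qed
    qed
    have Hall: "(\<Sum>i\<in>S. d i) \<le> FF n (card S)" if S: "S \<subseteq> {1..n}" for S
    proof -
      have "card S \<le> n" using card_mono[OF _ S] by simp
      then show ?thesis using top_k[where d=d and n=n, OF dm S] pre[of "card S"] by linarith
    qed
    have dual: "dotp n c a \<le> hsupp n c" for c
    proof -
      have "dotp n c a \<le> (\<Sum>i=1..n. \<bar>c i\<bar> * d i)"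
        unfolding dotp_def d_def by (intro sum_mono) (simp add: abs_mult[symmetric])
      also have "\<dots> \<le> GG n (\<lambda>i. \<bar>c i\<bar>)" by (rule GG_bound[OF Hall]) auto
      also have "\<dots> = hsupp n c" by (rule hsupp_formula[symmetric])
      finally show ?thesis .
    qed
    show "in_R_delta_p n a" by (rule strong_dual) (rule dual)
  qed
  have small: "a 1 \<le> real n + 1 \<longrightarrow> u_small n a"
  proof
    assume a1: "a 1 \<le> real n + 1"
    have ale: "a i \<le> real n + 1" if "1 \<le> i" "i \<le> n" for i
    proof (cases "i = n")
      case True
      have "a (n-1) \<le> a 1" using mono[of 1 "n-1"] assms(1) by simp
      then show ?thesis unfolding True using an a1 abs_ge_self[of "a n"] by linarith
    next
      case False
      then have "a i \<le> a 1" using mono[of 1 i] that by simp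
      then show ?thesis using a1 by simp
    qed
    have anb: "\<bar>a n\<bar> \<le> real n + 1"
    proof -
      have "a (n-1) \<le> a 1" using mono[of 1 "n-1"] assms(1) by simp
      then show ?thesis using an a1 by linarith
    qed
    have c1: "(\<Sum>i=1..k. a i) \<le> real (2*n*k) - real (k^2) + real k" if k: "k \<in> {1..n}" for k
    proof -
      have "(\<Sum>i=1..k. a i) \<le> (\<Sum>i=1..k. real n + 1)" using ale k by (intro sum_mono) auto
      also have "\<dots> = real k * (real n + 1)" by simp
      also have "\<dots> \<le> real (2*n*k) - real (k^2) + real k"
      proof -
        have "real k * real k \<le> real n * real k" using k by (intro mult_right_mono) auto
        then show ?thesis by (simp add: power2_eq_square algebra_simps)
      qed
      finally show ?thesis .
    qed
    have c2: "(\<Sum>i=1..n-1. a i) - a n \<le> real (n^2 + n)"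
    proof -
      have "(\<Sum>i=1..n-1. a i) \<le> (\<Sum>i=1..n-1. real n + 1)" using ale by (intro sum_mono) auto
      also have "\<dots> = real (n-1) * (real n + 1)" by simp
      finally have "(\<Sum>i=1..n-1. a i) \<le> real (n-1) * (real n + 1)" .
      moreover have "- a n \<le> real n + 1" using anb by linarith
      moreover have "real (n-1) = real n - 1" using n1 by (simp add: of_nat_diff)
      ultimately show ?thesis by (simp add: power2_eq_square algebra_simps)
    qed
    show "u_small n a" unfolding u_small_def using iff c1 c2 by blast
  qed
  show ?thesis using iff small by blast
qed

end
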